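(* Let $q\in(0,1]$. For $\nu\in\mathfrak h^*$ and $\lambda\in P_+$, \[ \varphi^\nu_q(\lambda) = \frac{\varphi^\nu_1(q^{2\lambda+2\rho})}{\varphi^\nu_1(q^{2\rho})}, \] as an identity of the defining formulas (valid for generic $\nu$, i.e. whenever no denominator vanishes, and in general by analytic continuation in $\nu$).
   Context: $K$ is a connected simply connected compact simple Lie group with complexification $G=KAN$ (Iwasawa decomposition), $\mathfrak h$ a Cartan subalgebra, $\Delta_+$ positive roots, $W$ the Weyl group with length function $l$, $P_+$ dominant weights, $\rho=\frac12\sum_{\alpha\in\Delta_+}\alpha$, $(\cdot,\cdot)$ the invariant form normalized by $(\alpha,\alpha)=2$ for short roots. For $\mu\in\mathfrak h^*_{\mathbb{R}}$, $q^\mu\in A$. Define $A_\nu(q^\mu)=\sum_{w\in W}(-1)^{l(w)}q^{(\mu,w\nu)}$, $\chi_\nu(q^\mu)=A_{\nu+\rho}(q^\mu)/A_\rho(q^\mu)$ (analytic continuation of the Weyl character formula), with $\chi_\nu(1)=\prod_{\alpha\in\Delta_+}(\nu+\rho,\alpha)/\prod_{\alpha\in\Delta_+}(\rho,\alpha)$. Set $\varphi^\nu_1(q^\mu)=\chi_{\frac12\nu-\rho}(q^\mu)/\chi_{\frac12\nu-\rho}(1)$ and $\varphi^\nu_q(\lambda)=\chi_\lambda(q^\nu)/\chi_\lambda(q^{2\rho})$ for $\lambda\in P_+$. *)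

theory Defs
  imports "HOL-Analysis.Analysis"
begin

text \<open>Real form h*_R of the dual Cartan subalgebra: a Euclidean space 'a whose inner
product is the invariant form (.,.). The complexification h* is modelled as
'a \<times> 'a, the pair (x, y) standing for x + i y.\<close>

definition reflection :: "'a::euclidean_space \<Rightarrow> 'a \<Rightarrow> 'a" where
  "reflection \<alpha> x = x - (2 * (x \<bullet> \<alpha>) / (\<alpha> \<bullet> \<alpha>)) *\<^sub>R \<alpha>"

definition irreducible_root_system :: "'a::euclidean_space set \<Rightarrow> bool" where
  "irreducible_root_system R \<longleftrightarrow>
     finite R \<and> 0 \<notin> R \<and> span R = UNIV \<and>
     (\<forall>\<alpha>\<in>R. reflection \<alpha> ` R = R) \<and>
     (\<forall>\<alpha>\<in>R. \<forall>\<beta>\<in>R. 2 * (\<alpha> \<bullet> \<beta>) / (\<beta> \<bullet> \<beta>) \<in> \<int>) \<and>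
     (\<forall>\<alpha>\<in>R. \<forall>c::real. c *\<^sub>R \<alpha> \<in> R \<longrightarrow> c = 1 \<or> c = -1) \<and>
     \<not> (\<exists>R1 R2. R1 \<noteq> {} \<and> R2 \<noteq> {} \<and> R1 \<union> R2 = R \<and> (\<forall>a\<in>R1. \<forall>b\<in>R2. a \<bullet> b = 0)) \<and>
     (\<forall>\<alpha>\<in>R. (\<forall>\<beta>\<in>R. \<alpha> \<bullet> \<alpha> \<le> \<beta> \<bullet> \<beta>) \<longrightarrow> \<alpha> \<bullet> \<alpha> = 2)"

definition positive_system :: "'a::euclidean_space set \<Rightarrow> 'a set \<Rightarrow> bool" where
  "positive_system R P \<longleftrightarrow>
     (\<exists>h. (\<forall>\<alpha>\<in>R. \<alpha> \<bullet> h \<noteq> 0) \<and> P = {\<alpha>\<in>R. \<alpha> \<bullet> h > 0})"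

definition simple_roots :: "'a::euclidean_space set \<Rightarrow> 'a set" where
  "simple_roots P = {\<alpha>\<in>P. \<not> (\<exists>\<beta>\<in>P. \<exists>\<gamma>\<in>P. \<alpha> = \<beta> + \<gamma>)}"

definition refl_word :: "'a::euclidean_space list \<Rightarrow> 'a \<Rightarrow> 'a" where
  "refl_word xs = foldr (\<circ>) (map reflection xs) id"

definition weyl :: "'a::euclidean_space set \<Rightarrow> ('a \<Rightarrow> 'a) set" where
  "weyl R = {refl_word xs | xs. set xs \<subseteq> R}"

definition wlen :: "'a::euclidean_space set \<Rightarrow> ('a \<Rightarrow> 'a) \<Rightarrow> nat" where
  "wlen P w = (LEAST n. \<exists>xs. length xs = n \<and> set xs \<subseteq> simple_roots P \<and> w = refl_word xs)"

definition rho :: "'a::euclidean_space set \<Rightarrow> 'a" where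
  "rho P = (1/2) *\<^sub>R (\<Sum>\<alpha>\<in>P. \<alpha>)"

text \<open>Dominant (integral) weights; K simply connected, so P is the full weight lattice.\<close>
definition dominant_weights :: "'a::euclidean_space set \<Rightarrow> 'a set" where
  "dominant_weights P = {l. \<forall>\<alpha>\<in>simple_roots P. 2 * (l \<bullet> \<alpha>) / (\<alpha> \<bullet> \<alpha>) \<in> \<nat>}"

definition cr :: "'a::euclidean_space \<Rightarrow> 'a \<times> 'a" where
  "cr x = (x, 0)"

definition cinner :: "'a::euclidean_space \<times> 'a \<Rightarrow> 'a \<times> 'a \<Rightarrow> complex" where
  "cinner u v = Complex (fst u \<bullet> fst v - snd u \<bullet> snd v) (fst u \<bullet> snd v + snd u \<bullet> fst v)"

definition capp :: "('a \<Rightarrow> 'a) \<Rightarrow> 'a \<times> 'a \<Rightarrow> 'a \<times> 'a" where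
  "capp w v = (w (fst v), w (snd v))"

definition qpow :: "real \<Rightarrow> complex \<Rightarrow> complex" where
  "qpow q z = exp (z * complex_of_real (ln q))"

definition Aalt :: "'a::euclidean_space set \<Rightarrow> 'a set \<Rightarrow> 'a \<times> 'a \<Rightarrow> real \<Rightarrow> 'a \<times> 'a \<Rightarrow> complex" where
  "Aalt R P \<nu> q \<mu> = (\<Sum>w\<in>weyl R. (-1) ^ wlen P w * qpow q (cinner \<mu> (capp w \<nu>)))"

text \<open>chi_nu(1) by the Weyl dimension formula.\<close>
definition chi_one :: "'a::euclidean_space set \<Rightarrow> 'a \<times> 'a \<Rightarrow> complex" where
  "chi_one P \<nu> = (\<Prod>\<alpha>\<in>P. cinner (\<nu> + cr (rho P)) (cr \<alpha>)) / (\<Prod>\<alpha>\<in>P. cinner (cr (rho P)) (cr \<alpha>))"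

definition chi :: "'a::euclidean_space set \<Rightarrow> 'a set \<Rightarrow> 'a \<times> 'a \<Rightarrow> real \<Rightarrow> 'a \<times> 'a \<Rightarrow> complex" where
  "chi R P \<nu> q \<mu> =
     (if q = 1 \<or> \<mu> = 0 then chi_one P \<nu>
      else Aalt R P (\<nu> + cr (rho P)) q \<mu> / Aalt R P (cr (rho P)) q \<mu>)"

definition phi1 :: "'a::euclidean_space set \<Rightarrow> 'a set \<Rightarrow> 'a \<times> 'a \<Rightarrow> real \<Rightarrow> 'a \<times> 'a \<Rightarrow> complex" where
  "phi1 R P \<nu> q \<mu> =
     chi R P ((1/2) *\<^sub>R \<nu> - cr (rho P)) q \<mu> / chi_one P ((1/2) *\<^sub>R \<nu> - cr (rho P))"

definition phiq :: "'a::euclidean_space set \<Rightarrow> 'a set \<Rightarrow> 'a \<times> 'a \<Rightarrow> real \<Rightarrow> 'a \<Rightarrow> complex" where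
  "phiq R P \<nu> q lam = chi R P (cr lam) q \<nu> / chi R P (cr lam) q (cr (2 *\<^sub>R rho P))"

end

theory Submission
  imports Defs
begin

lemma refl_lin: "linear (reflection a)"
proof (rule linearI)
  fix x y :: 'a
  have "2 * ((x + y) \<bullet> a) / (a \<bullet> a) = 2 * (x \<bullet> a) / (a \<bullet> a) + 2 * (y \<bullet> a) / (a \<bullet> a)"
    by (simp add: inner_add_left distrib_left add_divide_distrib)
  then show "reflection a (x + y) = reflection a x + reflection a y"
    unfolding reflection_def by (simp add: scaleR_add_left)
next
  fix c :: real and x :: 'a
  have "2 * ((c *\<^sub>R x) \<bullet> a) / (a \<bullet> a) = c * (2 * (x \<bullet> a) / (a \<bullet> a))" by simp
  then show "reflection a (c *\<^sub>R x) = c *\<^sub>R reflection a x"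
    unfolding reflection_def by (simp add: scaleR_diff_right)
qed

lemma refl_orth: "reflection a x \<bullet> reflection a y = x \<bullet> y"
proof (cases "a = 0")
  case True then show ?thesis by (simp add: reflection_def)
next
  case False
  then have c: "a \<bullet> a \<noteq> 0" by simp
  define s where "s = 2 * (x \<bullet> a) / (a \<bullet> a)"
  define t where "t = 2 * (y \<bullet> a) / (a \<bullet> a)"
  have s: "s * (a \<bullet> a) = 2 * (x \<bullet> a)" using c unfolding s_def by simp
  have t: "t * (a \<bullet> a) = 2 * (y \<bullet> a)" using c unfolding t_def by simp
  have "reflection a x \<bullet> reflection a y = (x - s *\<^sub>R a) \<bullet> (y - t *\<^sub>R a)"
    unfolding reflection_def s_def t_def ..
  also have "\<dots> = x \<bullet> y - t * (x \<bullet> a) - s * (a \<bullet> y) + s * (t * (a \<bullet> a))"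
    by (simp add: inner_diff_left inner_diff_right algebra_simps)
  also have "\<dots> = x \<bullet> y"
  proof -
    have st: "s * (a \<bullet> y) = t * (x \<bullet> a)" unfolding s_def t_def by (simp add: inner_commute)
    have "s * (t * (a \<bullet> a)) = 2 * (t * (x \<bullet> a))" unfolding t using st by (simp add: inner_commute)
    then show ?thesis using st by simp
  qed
  finally show ?thesis .
qed

lemma refl_invol: "reflection a (reflection a x) = x"
proof (cases "a = 0")
  case True then show ?thesis by (simp add: reflection_def)
next
  case False
  then have c: "a \<bullet> a \<noteq> 0" by simp
  define s where "s = 2 * (x \<bullet> a) / (a \<bullet> a)"
  have r: "reflection a x = x - s *\<^sub>R a" unfolding reflection_def s_def ..
  have "reflection a x \<bullet> a = x \<bullet> a - s * (a \<bullet> a)" unfolding r by (simp add: inner_diff_left)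
  also have "\<dots> = - (x \<bullet> a)" using c unfolding s_def by simp
  finally have k: "2 * (reflection a x \<bullet> a) / (a \<bullet> a) = - s" unfolding s_def by simp
  show ?thesis unfolding reflection_def[of a "reflection a x"] k unfolding r by simp
qed

lemma rw_Cons: "refl_word (a # xs) = reflection a \<circ> refl_word xs"
  by (simp add: refl_word_def)
lemma rw_Nil: "refl_word [] = id"
  by (simp add: refl_word_def)
lemma rw_append: "refl_word (xs @ ys) = refl_word xs \<circ> refl_word ys"
  by (induction xs) (auto simp: rw_Cons rw_Nil)

lemma rw_lin: "linear (refl_word xs)"
proof (induction xs)
  case Nil show ?case by (simp add: rw_Nil id_def linear_iff)
next
  case (Cons a xs) show ?case unfolding rw_Cons by (rule linear_compose[OF Cons refl_lin])
qed

lemma rw_orth: "refl_word xs x \<bullet> refl_word xs y = x \<bullet> y"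
  by (induction xs arbitrary: x y) (auto simp: rw_Cons rw_Nil refl_orth)

lemma rw_rev: "refl_word (rev xs) \<circ> refl_word xs = id"
proof (induction xs)
  case Nil then show ?case by (simp add: rw_Nil)
next
  case (Cons a xs)
  have "refl_word (rev (a#xs)) \<circ> refl_word (a#xs)
      = refl_word (rev xs) \<circ> (reflection a \<circ> reflection a) \<circ> refl_word xs"
    by (simp add: rw_append rw_Cons rw_Nil comp_assoc)
  also have "reflection a \<circ> reflection a = id" by (auto simp: refl_invol)
  finally show ?case using Cons by simp
qed

lemma rw_rev2: "refl_word xs \<circ> refl_word (rev xs) = id"
  using rw_rev[of "rev xs"] by simp

lemma rw_bij: "bij (refl_word xs)"
  by (rule o_bij[OF rw_rev rw_rev2])

lemma rw_inv: "inv (refl_word xs) = refl_word (rev xs)"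
  by (rule inv_unique_comp[OF rw_rev2 rw_rev])

lemma weyl_inv: "w \<in> weyl R \<Longrightarrow> inv w \<in> weyl R"
  unfolding weyl_def using rw_inv by fastforce

lemma weyl_invinv: "w \<in> weyl R \<Longrightarrow> inv (inv w) = w"
  unfolding weyl_def using rw_bij by (auto intro: inv_inv_eq)

lemma ex_inv: assumes "w \<in> weyl R"
  and "\<exists>xs. length xs = n \<and> set xs \<subseteq> S \<and> w = refl_word xs"
  shows "\<exists>xs. length xs = n \<and> set xs \<subseteq> S \<and> inv w = refl_word xs"
proof -
  from assms(2) obtain xs where "length xs = n" "set xs \<subseteq> S" "w = refl_word xs" by blast
  then show ?thesis by (intro exI[of _ "rev xs"]) (simp add: rw_inv)
qed

lemma wlen_inv: assumes "w \<in> weyl R" shows "wlen P (inv w) = wlen P w"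
proof -
  have "\<And>n. (\<exists>xs. length xs = n \<and> set xs \<subseteq> simple_roots P \<and> inv w = refl_word xs)
     = (\<exists>xs. length xs = n \<and> set xs \<subseteq> simple_roots P \<and> w = refl_word xs)"
  proof
    fix n assume "\<exists>xs. length xs = n \<and> set xs \<subseteq> simple_roots P \<and> inv w = refl_word xs"
    from ex_inv[OF weyl_inv[OF assms] this] show "\<exists>xs. length xs = n \<and> set xs \<subseteq> simple_roots P \<and> w = refl_word xs"
      unfolding weyl_invinv[OF assms] .
  qed (rule ex_inv[OF assms])
  then show ?thesis unfolding wlen_def by (rule arg_cong[where f=Least, OF ext])
qed

lemma weyl_lin: "w \<in> weyl R \<Longrightarrow> linear w"
  unfolding weyl_def using rw_lin by auto
lemma weyl_orth: "w \<in> weyl R \<Longrightarrow> w x \<bullet> w y = x \<bullet> y"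
  unfolding weyl_def using rw_orth by auto
lemma weyl_bij: "w \<in> weyl R \<Longrightarrow> bij w"
  unfolding weyl_def using rw_bij by auto

lemma swap:
  "Aalt R P ((1/2) *\<^sub>R \<nu>) q (cr (2 *\<^sub>R y)) = Aalt R P (cr y) q \<nu>"
proof -
  have "Aalt R P (cr y) q \<nu> = (\<Sum>w\<in>weyl R. (-1) ^ wlen P (inv w) * qpow q (cinner \<nu> (capp (inv w) (cr y))))"
    unfolding Aalt_def
    by (rule sum.reindex_bij_witness[where i=inv and j=inv])
       (auto simp: weyl_inv weyl_invinv)
  also have "\<dots> = Aalt R P ((1/2) *\<^sub>R \<nu>) q (cr (2 *\<^sub>R y))"
    unfolding Aalt_def
  proof (rule sum.cong[OF refl])
    fix w assume w: "w \<in> weyl R"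
    have l: "linear w" "linear (inv w)" using weyl_lin w weyl_inv by blast+
    have o: "y \<bullet> w a = inv w y \<bullet> a" for a
    proof -
      have "w (inv w y) = y" using bij_is_surj[OF weyl_bij[OF w]] by (rule surj_f_inv_f)
      then have "y \<bullet> w a = w (inv w y) \<bullet> w a" by simp
      also have "\<dots> = inv w y \<bullet> a" by (rule weyl_orth[OF w])
      finally show "y \<bullet> w a = inv w y \<bullet> a" .
    qed
    have "cinner \<nu> (capp (inv w) (cr y)) = cinner (cr (2 *\<^sub>R y)) (capp w ((1/2) *\<^sub>R \<nu>))"
    proof -
      have e1: "(2 *\<^sub>R y) \<bullet> w ((1/2) *\<^sub>R a) = a \<bullet> inv w y" for a
      proof -
        have "(2 *\<^sub>R y) \<bullet> w ((1/2) *\<^sub>R a) = y \<bullet> w a"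
          using linear_cmul[OF l(1), of "1/2" a] by simp
        also have "\<dots> = a \<bullet> inv w y" using o[of a] by (simp add: inner_commute)
        finally show ?thesis .
      qed
      have z: "inv w 0 = 0" using linear_0[OF l(2)] .
      show ?thesis unfolding cinner_def capp_def cr_def
        using e1[of "fst \<nu>"] e1[of "snd \<nu>"] by (simp add: z)
    qed
    then show "(-1) ^ wlen P (inv w) * qpow q (cinner \<nu> (capp (inv w) (cr y)))
       = (-1) ^ wlen P w * qpow q (cinner (cr (2 *\<^sub>R y)) (capp w ((1/2) *\<^sub>R \<nu>)))"
      using wlen_inv[OF w] by simp
  qed
  finally show ?thesis by simp
qed


lemma cr_add: "cr a + cr b = cr (a + b)" by (simp add: cr_def)
lemma cr_scale: "c *\<^sub>R cr a = cr (c *\<^sub>R a)" by (simp add: cr_def)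
lemma cr_eq0: "cr a = 0 \<longleftrightarrow> a = 0" by (simp add: cr_def zero_prod_def)

lemma P_facts:
  fixes R P :: "'a::euclidean_space set"
  assumes R: "irreducible_root_system R" and PS: "positive_system R P"
  obtains h where "finite P" "P \<noteq> {}" "\<forall>\<alpha>\<in>P. \<alpha> \<bullet> h > 0" "P \<subseteq> R" "rho P \<bullet> h > 0"
proof -
  from PS obtain h where h: "\<forall>\<alpha>\<in>R. \<alpha> \<bullet> h \<noteq> 0" "P = {\<alpha>\<in>R. \<alpha> \<bullet> h > 0}"
    unfolding positive_system_def by blast
  have fR: "finite R" using R[unfolded irreducible_root_system_def] by (elim conjE) assumption
  have spR: "span R = UNIV" using R[unfolded irreducible_root_system_def] by (elim conjE) assumption
  have refl: "\<forall>\<alpha>\<in>R. reflection \<alpha> ` R = R" using R[unfolded irreducible_root_system_def] by (elim conjE) assumption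
  have "R \<noteq> {}"
  proof
    assume "R = {}"
    then have "(UNIV::'a set) = {0}" using spR by simp
    moreover obtain b :: 'a where "b \<in> Basis" using nonempty_Basis by blast
    ultimately show False using nonzero_Basis by blast
  qed
  then obtain \<alpha> where a: "\<alpha> \<in> R" by blast
  have "reflection \<alpha> \<alpha> \<in> R" using refl a by blast
  moreover have "reflection \<alpha> \<alpha> = - \<alpha>"
  proof (cases "\<alpha> = 0")
    case False
    then have "2 * (\<alpha> \<bullet> \<alpha>) / (\<alpha> \<bullet> \<alpha>) = 2" by simp
    then show ?thesis unfolding reflection_def by (simp add: scaleR_2)
  qed (simp add: reflection_def)
  ultimately have "-\<alpha> \<in> R" by simp
  then have ne: "P \<noteq> {}" using h a
  proof (cases "\<alpha> \<bullet> h > 0")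
    case True then show ?thesis unfolding h(2) using a by blast
  next
    case False
    have "\<alpha> \<bullet> h \<noteq> 0" using h(1) a by blast
    then have "\<alpha> \<bullet> h < 0" using False by linarith
    then have "(-\<alpha>) \<bullet> h > 0" by simp
    then show ?thesis unfolding h(2) using \<open>-\<alpha> \<in> R\<close> by blast
  qed
  have fP: "finite P" unfolding h(2) using fR by simp
  have pos: "\<forall>\<alpha>\<in>P. \<alpha> \<bullet> h > 0" unfolding h(2) by blast
  have sub: "P \<subseteq> R" unfolding h(2) by blast
  have "rho P \<bullet> h = (1/2) * (\<Sum>\<beta>\<in>P. \<beta> \<bullet> h)"
    by (simp only: rho_def inner_scaleR_left inner_sum_left)
  moreover have "(\<Sum>\<beta>\<in>P. \<beta> \<bullet> h) > 0"
    by (rule sum_pos[OF fP ne]) (use pos in blast)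
  ultimately have "rho P \<bullet> h > 0" by simp
  then show ?thesis by (rule that[OF fP ne pos sub])
qed

lemma rho_nonzero:
  assumes R: "irreducible_root_system R" and PS: "positive_system R P"
  shows "rho P \<noteq> 0"
proof
  assume "rho P = 0"
  moreover obtain h where "rho P \<bullet> h > 0" using P_facts[OF R PS] by blast
  ultimately show False by simp
qed

lemma not_dom_neg_rho:
  fixes R P :: "'a::euclidean_space set"
  assumes R: "irreducible_root_system R" and PS: "positive_system R P"
  shows "- rho P \<notin> dominant_weights P"
proof
  assume d: "- rho P \<in> dominant_weights P"
  obtain h where fP: "finite P" and ne: "P \<noteq> {}" and pos: "\<forall>\<alpha>\<in>P. \<alpha> \<bullet> h > 0"
    and sub: "P \<subseteq> R" and rh: "rho P \<bullet> h > 0"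
    using P_facts[OF R PS] by blast
  have z: "0 \<notin> R" using R[unfolded irreducible_root_system_def] by (elim conjE) assumption
  have simp_le: "\<alpha> \<bullet> rho P \<le> 0" if a: "\<alpha> \<in> simple_roots P" for \<alpha>
  proof -
    have "\<alpha> \<in> R" using a sub unfolding simple_roots_def by auto
    then have "\<alpha> \<noteq> 0" using z by auto
    then have aa: "\<alpha> \<bullet> \<alpha> > 0" by simp
    have "2 * (- rho P \<bullet> \<alpha>) / (\<alpha> \<bullet> \<alpha>) \<in> \<nat>" using d a unfolding dominant_weights_def by blast
    then have "2 * (- rho P \<bullet> \<alpha>) / (\<alpha> \<bullet> \<alpha>) \<ge> 0" by (metis Nats_cases of_nat_0_le_iff)
    moreover have "2 * (- rho P \<bullet> \<alpha>) = (2 * (- rho P \<bullet> \<alpha>) / (\<alpha> \<bullet> \<alpha>)) * (\<alpha> \<bullet> \<alpha>)"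
      using aa by simp
    ultimately have "2 * (- rho P \<bullet> \<alpha>) \<ge> 0" using aa by (metis mult_nonneg_nonneg less_imp_le)
    then show ?thesis using inner_commute[of \<alpha> "rho P"] by simp
  qed
  have main: "\<forall>\<beta>. \<beta> \<in> P \<longrightarrow> card {\<gamma>\<in>P. \<gamma> \<bullet> h < \<beta> \<bullet> h} = n \<longrightarrow> \<beta> \<bullet> rho P \<le> 0" for n
  proof (induction n rule: less_induct)
    case (less n)
    show ?case
    proof (intro allI impI)
      fix \<beta> assume b: "\<beta> \<in> P" and c: "card {\<gamma>\<in>P. \<gamma> \<bullet> h < \<beta> \<bullet> h} = n"
      show "\<beta> \<bullet> rho P \<le> 0"
      proof (cases "\<beta> \<in> simple_roots P")
        case True then show ?thesis using simp_le by blast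
      next
        case False
        then obtain \<gamma> \<delta> where g: "\<gamma> \<in> P" "\<delta> \<in> P" "\<beta> = \<gamma> + \<delta>"
          using b unfolding simple_roots_def by blast
        have sm: "card {\<gamma>'\<in>P. \<gamma>' \<bullet> h < x \<bullet> h} < n" if "x \<in> P" "x \<bullet> h < \<beta> \<bullet> h" for x
        proof -
          have "{\<gamma>'\<in>P. \<gamma>' \<bullet> h < x \<bullet> h} \<subset> {\<gamma>\<in>P. \<gamma> \<bullet> h < \<beta> \<bullet> h}"
            using that by auto
          moreover have "finite {\<gamma>\<in>P. \<gamma> \<bullet> h < \<beta> \<bullet> h}" using fP by simp
          ultimately have "card {\<gamma>'\<in>P. \<gamma>' \<bullet> h < x \<bullet> h} < card {\<gamma>\<in>P. \<gamma> \<bullet> h < \<beta> \<bullet> h}"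
            by (intro psubset_card_mono)
          then show ?thesis using c by simp
        qed
        have "\<gamma> \<bullet> h < \<beta> \<bullet> h" "\<delta> \<bullet> h < \<beta> \<bullet> h" using g pos by (auto simp: inner_add_left)
        then have "\<gamma> \<bullet> rho P \<le> 0" "\<delta> \<bullet> rho P \<le> 0" using less sm g by blast+
        then show ?thesis using g by (simp add: inner_add_left)
      qed
    qed
  qed
  have rr: "rho P \<bullet> r = (1/2) * (\<Sum>\<beta>\<in>P. \<beta> \<bullet> r)" for r
    by (simp only: rho_def inner_scaleR_left inner_sum_left)
  have "rho P \<bullet> rho P = (1/2) * (\<Sum>\<beta>\<in>P. \<beta> \<bullet> rho P)" by (rule rr)
  also have "\<dots> \<le> 0" using main by (simp add: sum_nonpos)
  finally have "rho P \<bullet> rho P \<le> 0" .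
  then have "rho P = 0" by (metis antisym inner_ge_zero inner_eq_zero_iff)
  then show False using rh by simp
qed

theorem proposition4p3:
  fixes R P :: "'a::euclidean_space set" and q :: real
    and \<nu> :: "'a \<times> 'a" and lam :: 'a
  assumes "irreducible_root_system R"
    and "positive_system R P"
    and "0 < q" and "q \<le> 1"
    and "lam \<in> dominant_weights P"
    \<comment> \<open>genericity: none of the denominators in the defining formulas vanishes\<close>
    and "q \<noteq> 1 \<Longrightarrow> \<nu> \<noteq> 0 \<Longrightarrow> Aalt R P (cr (rho P)) q \<nu> \<noteq> 0"
    and "q \<noteq> 1 \<Longrightarrow> Aalt R P (cr (rho P)) q (cr (2 *\<^sub>R rho P)) \<noteq> 0"
    and "q \<noteq> 1 \<Longrightarrow> Aalt R P (cr (rho P)) q (cr (2 *\<^sub>R lam + 2 *\<^sub>R rho P)) \<noteq> 0"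
    and "chi R P (cr lam) q (cr (2 *\<^sub>R rho P)) \<noteq> 0"
    and "chi_one P ((1/2) *\<^sub>R \<nu> - cr (rho P)) \<noteq> 0"
    and "phi1 R P \<nu> q (cr (2 *\<^sub>R rho P)) \<noteq> 0"
  shows "phiq R P \<nu> q lam =
           phi1 R P \<nu> q (cr (2 *\<^sub>R lam + 2 *\<^sub>R rho P)) / phi1 R P \<nu> q (cr (2 *\<^sub>R rho P))"
proof (cases "q = 1")
  case True
  have chi1: "chi R P x q m = chi_one P x" for x m unfolding chi_def using True by simp
  have n1: "chi_one P (cr lam) \<noteq> 0" using assms(9) unfolding chi1 .
  have n2: "chi_one P ((1/2) *\<^sub>R \<nu> - cr (rho P)) \<noteq> 0" using assms(10) .
  show ?thesis unfolding phiq_def phi1_def chi1 using n1 n2 by simp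
next
  case q: False
  show ?thesis
  proof (cases "\<nu> = 0")
    case True
    obtain h where fP: "finite P" and ne: "P \<noteq> {}"
      using P_facts[OF assms(1,2)] by blast
    then obtain \<alpha> where "\<alpha> \<in> P" by blast
    then have "(\<Prod>\<alpha>\<in>P. cinner (- cr (rho P) + cr (rho P)) (cr \<alpha>)) = 0"
      using fP by (intro prod_zero) (auto simp: cinner_def Complex_eq_0)
    moreover have "(1/2) *\<^sub>R \<nu> - cr (rho P) = - cr (rho P)" using True by simp
    ultimately have "chi_one P ((1/2) *\<^sub>R \<nu> - cr (rho P)) = 0"
      unfolding chi_one_def by simp
    then show ?thesis using assms(10) by blast
  next
    case nu: False
    let ?r = "rho P"
    have r0: "cr (2 *\<^sub>R ?r) \<noteq> 0" using rho_nonzero[OF assms(1,2)] by (simp add: cr_eq0)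
    have e2: "cr (2 *\<^sub>R lam + 2 *\<^sub>R ?r) = cr (2 *\<^sub>R (lam + ?r))" by (simp add: scaleR_add_right)
    have l0: "cr (2 *\<^sub>R lam + 2 *\<^sub>R ?r) \<noteq> 0"
    proof
      assume "cr (2 *\<^sub>R lam + 2 *\<^sub>R ?r) = 0"
      then have "cr (2 *\<^sub>R (lam + ?r)) = 0" using e2 by simp
      then have "2 *\<^sub>R (lam + ?r) = 0" by (simp only: cr_eq0)
      then have "lam + ?r = 0" by simp
      then have "lam = - ?r" by (simp add: eq_neg_iff_add_eq_0)
      then show False using assms(5) not_dom_neg_rho[OF assms(1,2)] by simp
    qed
    have hv: "(1/2) *\<^sub>R \<nu> - cr ?r + cr ?r = (1/2) *\<^sub>R \<nu>" by simp
    have e2': "cr (2 *\<^sub>R lam + 2 *\<^sub>R ?r) = cr (2 *\<^sub>R (lam + ?r))" by (simp add: scaleR_add_right)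
    define a where "a = Aalt R P (cr (lam + ?r)) q \<nu>"
    define b where "b = Aalt R P (cr ?r) q \<nu>"
    define c where "c = Aalt R P (cr (lam + ?r)) q (cr (2 *\<^sub>R ?r))"
    define d where "d = Aalt R P (cr ?r) q (cr (2 *\<^sub>R ?r))"
    define e where "e = Aalt R P (cr ?r) q (cr (2 *\<^sub>R (lam + ?r)))"
    define C where "C = chi_one P ((1/2) *\<^sub>R \<nu> - cr ?r)"
    have half: "(1/2) *\<^sub>R cr (2 *\<^sub>R x) = cr x" for x by (simp add: cr_def)
    have ce: "c = e" unfolding c_def e_def
      using swap[of R P "cr (2 *\<^sub>R (lam + ?r))" q ?r] unfolding half .
    have b0: "b \<noteq> 0" using assms(6) q nu unfolding b_def by blast
    have d0: "d \<noteq> 0" using assms(7) q unfolding d_def by blast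
    have e0: "e \<noteq> 0" using assms(8)[unfolded e2] q unfolding e_def by blast
    have C0: "C \<noteq> 0" using assms(10) unfolding C_def .
    have c1: "\<not> (q = 1 \<or> \<nu> = 0)" using q nu by blast
    have c2: "\<not> (q = 1 \<or> cr (2 *\<^sub>R ?r) = 0)" using q r0 by blast
    have c3: "\<not> (q = 1 \<or> cr (2 *\<^sub>R (lam + ?r)) = 0)" using q l0 unfolding e2 by blast
    have L: "phiq R P \<nu> q lam = (a / b) / (c / d)"
      unfolding phiq_def chi_def if_not_P[OF c1] if_not_P[OF c2] a_def b_def c_def d_def cr_add ..
    have R1: "phi1 R P \<nu> q (cr (2 *\<^sub>R lam + 2 *\<^sub>R ?r)) = (a / e) / C"
      unfolding e2 phi1_def chi_def if_not_P[OF c3] hv swap a_def e_def C_def ..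
    have R2: "phi1 R P \<nu> q (cr (2 *\<^sub>R ?r)) = (b / d) / C"
      unfolding phi1_def chi_def if_not_P[OF c2] hv swap b_def d_def C_def ..
    show ?thesis unfolding L R1 R2 using b0 d0 e0 C0 ce by (simp add: field_simps)
  qed
qed

end
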